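(* Let $C$ be a Greene–Kleitman chain of length $h$ in $Q_n$ and let $C'$ be a child of $C$ obtained by matching the two consecutive $*$s of $C$ at positions $a$ and $b$. Then there are exactly $h-2$ flipping $4$-cycles between $C$ and $C'$; they use pairwise distinct edges of $C$ and pairwise distinct edges of $C'$, and the edges of $C$ they use are all edges of $C$ except the two consecutive edges of $C$ that flip the coordinates $a$ and $b$.
   Context: $Q_n$ is the hypercube on $\{0,1\}^n$. Let $D$ be the set of bitstrings (including the empty string) with equally many $0$s and $1$s such that every prefix has at least as many $0$s as $1$s. A (Greene–Kleitman) chain of length $h$ is encoded as a string of length $n$ over $\{0,1,*\}$ of the form $u_0*u_1*\cdots*u_{h-1}*u_h$ with all $u_j\in D$; it is the path in $Q_n$ whose vertices are obtained by replacing the $*$s by $i$ ones followed by $h-i$ zeros, $i=0,1,\ldots,h$ (consecutive vertices differ in one $*$-position). A chain $C'$ of length $h-2$ is a child of a chain $C$ of length $h$ if $C'$ is obtained from $C$ by replacing two consecutive $*$s (i.e., two $*$s with no $*$ between them) by $0$ and $1$, respectively ("matching two $*$s"). A flipping $4$-cycle between two vertex-disjoint paths $P,P'$ is a $4$-cycle in $Q_n$ that shares exactly one edge with each of the two paths. *)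

theory Defs
  imports Main
begin

text \<open>Symbols of a chain encoding: 0, 1 and *.  Vertices of Q_n are bool lists
  of length n (False = 0, True = 1).\<close>
datatype sym = Zero | One | Star

fun bsym :: "bool \<Rightarrow> sym" where
  "bsym False = Zero" | "bsym True = One"

definition dyck :: "bool list \<Rightarrow> bool" where
  "dyck u \<longleftrightarrow> length (filter (\<lambda>b. \<not> b) u) = length (filter id u) \<and>
     (\<forall>k \<le> length u. length (filter id (take k u)) \<le> length (filter (\<lambda>b. \<not> b) (take k u)))"

fun join :: "sym list list \<Rightarrow> sym list" where
  "join [] = []"
| "join [u] = u"
| "join (u # us) = u @ Star # join us"

definition gk_chain :: "nat \<Rightarrow> nat \<Rightarrow> sym list \<Rightarrow> bool" where
  "gk_chain n h w \<longleftrightarrow> length w = n \<and>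
     (\<exists>us. length us = h + 1 \<and> (\<forall>u\<in>set us. dyck u) \<and> w = join (map (map bsym) us))"

fun fill :: "sym list \<Rightarrow> nat \<Rightarrow> bool list" where
  "fill [] i = []"
| "fill (Zero # w) i = False # fill w i"
| "fill (One # w) i = True # fill w i"
| "fill (Star # w) i = (0 < i) # fill w (i - 1)"

definition chain_vertices :: "sym list \<Rightarrow> nat \<Rightarrow> bool list set" where
  "chain_vertices w h = {fill w i | i. i \<le> h}"

definition chain_edges :: "sym list \<Rightarrow> nat \<Rightarrow> bool list set set" where
  "chain_edges w h = {{fill w i, fill w (Suc i)} | i. i < h}"

definition child_at :: "sym list \<Rightarrow> nat \<Rightarrow> nat \<Rightarrow> sym list \<Rightarrow> bool" where
  "child_at w a b w' \<longleftrightarrow> a < b \<and> b < length w \<and> w ! a = Star \<and> w ! b = Star \<and>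
     (\<forall>j. a < j \<and> j < b \<longrightarrow> w ! j \<noteq> Star) \<and> w' = w[a := Zero, b := One]"

definition qadj :: "nat \<Rightarrow> bool list \<Rightarrow> bool list \<Rightarrow> bool" where
  "qadj n x y \<longleftrightarrow> length x = n \<and> length y = n \<and> card {i. i < n \<and> x ! i \<noteq> y ! i} = 1"

definition cycle4 :: "nat \<Rightarrow> bool list set set \<Rightarrow> bool" where
  "cycle4 n E \<longleftrightarrow> (\<exists>v0 v1 v2 v3. distinct [v0, v1, v2, v3] \<and>
     qadj n v0 v1 \<and> qadj n v1 v2 \<and> qadj n v2 v3 \<and> qadj n v3 v0 \<and>
     E = {{v0, v1}, {v1, v2}, {v2, v3}, {v3, v0}})"

definition flipping :: "nat \<Rightarrow> sym list \<Rightarrow> nat \<Rightarrow> sym list \<Rightarrow> nat \<Rightarrow> bool list set set \<Rightarrow> bool" where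
  "flipping n w h w' h' E \<longleftrightarrow> chain_vertices w h \<inter> chain_vertices w' h' = {} \<and>
     cycle4 n E \<and> card (E \<inter> chain_edges w h) = 1 \<and> card (E \<inter> chain_edges w' h') = 1"

definition flips :: "nat \<Rightarrow> bool list set \<Rightarrow> bool" where
  "flips a e \<longleftrightarrow> (\<exists>x y. e = {x, y} \<and> x ! a \<noteq> y ! a)"

end

theory Submission
  imports Defs
begin


definition R :: "sym list \<Rightarrow> nat \<Rightarrow> nat" where
  "R w t = card {q. q < t \<and> q < length w \<and> w ! q = Star}"

lemma length_fill[simp]: "length (fill w i) = length w"
  by (induction w i rule: fill.induct) auto

lemma nth_fill0: "t < length w \<Longrightarrow> fill w i ! t =
  (if w ! t = Star then length (filter (\<lambda>s. s = Star) (take t w)) < i else w ! t = One)"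
proof (induction w i arbitrary: t rule: fill.induct)
  case (1 i) then show ?case by simp
next
  case (2 w i) then show ?case by (cases t) auto
next
  case (3 w i) then show ?case by (cases t) auto
next
  case (4 w i) then show ?case by (cases t) auto
qed

lemma filter_take_R: "length (filter (\<lambda>s. s = Star) (take t w)) = R w t"
  unfolding R_def length_filter_conv_card
  by (rule arg_cong[where f=card]) (auto simp: nth_take)

lemma nth_fill: "t < length w \<Longrightarrow> fill w i ! t =
  (if w ! t = Star then R w t < i else w ! t = One)"
  using nth_fill0 filter_take_R by simp

lemma R_full: "R w (length w) = length (filter (\<lambda>s. s = Star) w)"
  using filter_take_R[of "length w" w] by simp

lemma join_count: "(\<forall>u\<in>set us. Star \<notin> set u) \<Longrightarrow> us \<noteq> [] \<Longrightarrow>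
  length (filter (\<lambda>s. s = Star) (join us)) = length us - 1"
proof (induction us rule: join.induct)
  case 1 then show ?case by simp
next
  case (2 u) then show ?case by (simp add: filter_empty_conv) (metis)
next
  case (3 u v vs) then show ?case by (simp add: filter_empty_conv) (metis)
qed

lemma bsym_not_star: "Star \<notin> set (map bsym u)"
proof -
  have "bsym z \<noteq> Star" for z by (cases z) auto
  then show ?thesis by (metis ex_map_conv)
qed

lemma R_surj0: "k < length (filter P w) \<Longrightarrow>
   \<exists>t < length w. P (w ! t) \<and> length (filter P (take t w)) = k"
proof (induction w arbitrary: k)
  case Nil then show ?case by simp
next
  case (Cons s w)
  show ?case
  proof (cases "P s")
    case True
    show ?thesis
    proof (cases k)
      case 0 then show ?thesis using True by (intro exI[of _ 0]) auto
    next
      case (Suc k')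
      then have "k' < length (filter P w)" using Cons.prems True by simp
      from Cons.IH[OF this] obtain t where "t < length w" "P (w ! t)" "length (filter P (take t w)) = k'" by blast
      then show ?thesis using True Suc by (intro exI[of _ "Suc t"]) auto
    qed
  next
    case False
    then have "k < length (filter P w)" using Cons.prems by simp
    from Cons.IH[OF this] obtain t where "t < length w" "P (w ! t)" "length (filter P (take t w)) = k" by blast
    then show ?thesis using False by (intro exI[of _ "Suc t"]) auto
  qed
qed

lemma card1_eq: "card A = 1 \<Longrightarrow> k1 \<in> A \<Longrightarrow> k2 \<in> A \<Longrightarrow> k1 = k2"
  by (metis card_1_singletonE singletonD)

lemma flips_pair: "flips a {u, v} \<longleftrightarrow> u ! a \<noteq> v ! a"
  unfolding flips_def by (auto simp: doubleton_eq_iff)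

lemma qadj_sym: "qadj n u v = qadj n v u"
  unfolding qadj_def by (auto simp: eq_commute)

lemma cyc_nb: "distinct [v0, v1, v2, v3] \<Longrightarrow> E = {{v0, v1}, {v1, v2}, {v2, v3}, {v3, v0}} \<Longrightarrow>
  P \<in> {v0, v1, v2, v3} \<Longrightarrow> \<exists>A B. A \<noteq> B \<and> A \<noteq> P \<and> B \<noteq> P \<and> {P, A} \<in> E \<and> {P, B} \<in> E"
  by (auto simp: insert_commute)

lemma cyc_tri: "distinct [v0, v1, v2, v3] \<Longrightarrow> E = {{v0, v1}, {v1, v2}, {v2, v3}, {v3, v0}} \<Longrightarrow>
  {P, Q} \<in> E \<Longrightarrow> {Q, S} \<in> E \<Longrightarrow> {P, S} \<in> E \<Longrightarrow> P \<noteq> Q \<Longrightarrow> Q \<noteq> S \<Longrightarrow> P \<noteq> S \<Longrightarrow> False"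
  by (auto simp: doubleton_eq_iff)

lemma cyc_edge: "E = {{v0, v1}, {v1, v2}, {v2, v3}, {v3, v0}} \<Longrightarrow>
  qadj n v0 v1 \<Longrightarrow> qadj n v1 v2 \<Longrightarrow> qadj n v2 v3 \<Longrightarrow> qadj n v3 v0 \<Longrightarrow> e \<in> E \<Longrightarrow>
  \<exists>P Q. e = {P, Q} \<and> P \<in> {v0, v1, v2, v3} \<and> Q \<in> {v0, v1, v2, v3} \<and> qadj n P Q"
  by auto



locale gk =
  fixes n h a b :: nat and C C' :: "sym list"
  assumes chain: "gk_chain n h C" and child: "child_at C a b C'"
begin

definition ka where "ka = R C a"
definition Y where "Y j k = (if k < ka then k < j else if k = ka then False else if k = Suc ka then True else k < j + 2)"
definition c where "c i = (if i \<le> ka then i else i - 2)"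

lemma lenC: "length C = n" using chain unfolding gk_chain_def by simp
lemma C'_def: "C' = C[a := Zero, b := One]" using child unfolding child_at_def by simp
lemma lenC': "length C' = n" using lenC C'_def by simp
lemma ab: "a < b" "b < n" "C ! a = Star" "C ! b = Star" "\<And>j. a < j \<Longrightarrow> j < b \<Longrightarrow> C ! j \<noteq> Star"
  using child lenC unfolding child_at_def by auto

lemma hcount: "R C n = h"
proof -
  obtain us where us: "length us = h + 1" "C = join (map (map bsym) us)"
    using chain unfolding gk_chain_def by blast
  have "us \<noteq> []" using us(1) by auto
  have "length (filter (\<lambda>s. s = Star) C) = h"
    using \<open>us \<noteq> []\<close> join_count[of "map (map bsym) us"] us bsym_not_star by auto
  then show ?thesis using R_full[of C] lenC by simp
qed

lemma Rmono: "t < t' \<Longrightarrow> t' \<le> n \<Longrightarrow> C ! t = Star \<Longrightarrow> R C t < R C t'"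
proof -
  assume a1: "t < t'" "t' \<le> n" "C ! t = Star"
  let ?A = "{q. q < t \<and> q < length C \<and> C ! q = Star}"
  let ?B = "{q. q < t' \<and> q < length C \<and> C ! q = Star}"
  have "?A \<subseteq> ?B" using a1 by auto
  moreover have "t \<in> ?B" "t \<notin> ?A" using a1 lenC by auto
  ultimately have "?A \<subset> ?B" by blast
  moreover have "finite ?B" by simp
  ultimately show ?thesis unfolding R_def by (simp add: psubset_card_mono)
qed

lemma Rinj: "t < n \<Longrightarrow> t' < n \<Longrightarrow> C ! t = Star \<Longrightarrow> C ! t' = Star \<Longrightarrow> R C t = R C t' \<Longrightarrow> t = t'"
proof (rule ccontr)
  assume h: "t < n" "t' < n" "C ! t = Star" "C ! t' = Star" "R C t = R C t'" "t \<noteq> t'"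
  show False
  proof (cases "t < t'")
    case True then show False using Rmono[of t t'] h by simp
  next
    case False then have "t' < t" using h by simp
    then show False using Rmono[of t' t] h by simp
  qed
qed

lemma Rlt: "t < n \<Longrightarrow> C ! t = Star \<Longrightarrow> R C t < h"
  using Rmono[of t n] hcount by simp

lemma Rb: "R C b = Suc ka"
proof -
  have "{q. q < b \<and> q < length C \<and> C ! q = Star} = insert a {q. q < a \<and> q < length C \<and> C ! q = Star}"
    using ab lenC by auto (meson linorder_neqE_nat)
  then show ?thesis unfolding R_def ka_def by simp
qed

lemma ka_lt: "Suc ka < h" using Rlt[of b] ab Rb by simp

lemma Rsurj: "k < h \<Longrightarrow> \<exists>t < n. C ! t = Star \<and> R C t = k"
  using R_surj0[of k "\<lambda>s. s = Star" C] R_full[of C] hcount lenC filter_take_R by auto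

lemma RC': assumes "t < n" "C ! t = Star" "t \<noteq> a" "t \<noteq> b"
  shows "R C' t = (if t < a then R C t else R C t - 2)"
proof -
  have eq: "{q. q < t \<and> q < length C' \<and> C' ! q = Star} = {q. q < t \<and> q < length C \<and> C ! q = Star} - {a, b}"
    using C'_def lenC ab by (auto simp: nth_list_update)
  show ?thesis
  proof (cases "t < a")
    case True
    then have "{q. q < t \<and> q < length C \<and> C ! q = Star} - {a, b} = {q. q < t \<and> q < length C \<and> C ! q = Star}"
      using ab by auto
    then show ?thesis using eq True unfolding R_def by simp
  next
    case False
    then have "b < t" using ab assms by (metis linorder_neqE_nat)
    then have "{a, b} \<subseteq> {q. q < t \<and> q < length C \<and> C ! q = Star}" using ab lenC by auto
    then have "card ({q. q < t \<and> q < length C \<and> C ! q = Star} - {a, b}) = card {q. q < t \<and> q < length C \<and> C ! q = Star} - 2"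
      using ab by (subst card_Diff_subset) auto
    then show ?thesis using eq False unfolding R_def by simp
  qed
qed

definition isv where "isv u U \<longleftrightarrow> length u = n \<and> (\<forall>t < n. u ! t = (if C ! t = Star then U (R C t) else C ! t = One))"

lemma isv_x: "isv (fill C i) (\<lambda>k. k < i)"
  unfolding isv_def using nth_fill lenC by simp

lemma isv_y: "isv (fill C' j) (Y j)"
  unfolding isv_def
proof (intro conjI allI impI)
  show "length (fill C' j) = n" using lenC' by simp
  fix t assume t: "t < n"
  show "fill C' j ! t = (if C ! t = Star then Y j (R C t) else C ! t = One)"
  proof (cases "t = a \<or> t = b")
    case True
    then show ?thesis using nth_fill[of t C' j] t lenC' C'_def ab Rb unfolding Y_def ka_def
      by (auto simp: nth_list_update)
  next
    case False
    then have C't: "C' ! t = C ! t" using C'_def by simp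
    show ?thesis
    proof (cases "C ! t = Star")
      case st: True
      have "R C' t = (if t < a then R C t else R C t - 2)" using RC' t st False by simp
      moreover have "t < a \<Longrightarrow> R C t < ka" using Rmono[of t a] ab st unfolding ka_def by simp
      moreover have "\<not> t < a \<Longrightarrow> Suc ka < R C t"
      proof -
        assume "\<not> t < a"
        then have "b < t" using ab False st by (metis linorder_neqE_nat)
        then show ?thesis using Rmono[of b t] ab t Rb by simp
      qed
      ultimately show ?thesis using nth_fill[of t C' j] t lenC' C't st unfolding Y_def by auto
    next
      case False
      then show ?thesis using nth_fill[of t C' j] t lenC' C't by simp
    qed
  qed
qed

lemma diffcard: assumes "isv u U" "isv v V"
  shows "card {t. t < n \<and> u ! t \<noteq> v ! t} = card {k. k < h \<and> U k \<noteq> V k}"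
proof -
  let ?S = "{t. t < n \<and> C ! t = Star \<and> U (R C t) \<noteq> V (R C t)}"
  have eqt: "(u ! t \<noteq> v ! t) = (C ! t = Star \<and> U (R C t) \<noteq> V (R C t))" if "t < n" for t
  proof -
    have "u ! t = (if C ! t = Star then U (R C t) else C ! t = One)"
         "v ! t = (if C ! t = Star then V (R C t) else C ! t = One)"
      using assms that unfolding isv_def by blast+
    then show ?thesis by (cases "C ! t = Star") simp_all
  qed
  have 1: "{t. t < n \<and> u ! t \<noteq> v ! t} = ?S"
  proof (rule Collect_cong)
    fix t show "(t < n \<and> u ! t \<noteq> v ! t) = (t < n \<and> C ! t = Star \<and> U (R C t) \<noteq> V (R C t))"
      using eqt[of t] by (cases "t < n") simp_all
  qed
  have 2: "inj_on (R C) ?S" by (intro inj_onI) (use Rinj in auto)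
  have 3: "R C ` ?S = {k. k < h \<and> U k \<noteq> V k}"
  proof
    show "R C ` ?S \<subseteq> {k. k < h \<and> U k \<noteq> V k}" using Rlt by auto
    show "{k. k < h \<and> U k \<noteq> V k} \<subseteq> R C ` ?S"
    proof
      fix k assume "k \<in> {k. k < h \<and> U k \<noteq> V k}"
      then obtain t where "t < n" "C ! t = Star" "R C t = k" "U k \<noteq> V k" using Rsurj by auto
      then show "k \<in> R C ` ?S" by force
    qed
  qed
  have "card (R C ` ?S) = card ?S" by (rule card_image[OF 2])
  then show ?thesis using 1 3 by simp
qed

lemma eqtrans: "isv u U \<Longrightarrow> isv v V \<Longrightarrow> u = v \<Longrightarrow> k < h \<Longrightarrow> U k = V k"
  using Rsurj unfolding isv_def by metis

lemma qadj_iff: "isv u U \<Longrightarrow> isv v V \<Longrightarrow> qadj n u v \<longleftrightarrow> card {k. k < h \<and> U k \<noteq> V k} = 1"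
proof -
  assume h: "isv u U" "isv v V"
  then have "length u = n" "length v = n" unfolding isv_def by auto
  moreover have "card {t. t < n \<and> u ! t \<noteq> v ! t} = card {k. k < h \<and> U k \<noteq> V k}" by (rule diffcard[OF h])
  ultimately show ?thesis unfolding qadj_def by (simp only: simp_thms)
qed

end


context gk
begin

lemma two_mem: "k1 \<in> A \<Longrightarrow> k2 \<in> A \<Longrightarrow> k1 \<noteq> k2 \<Longrightarrow> card A \<noteq> 1"
  using card1_eq[of A k1 k2] by auto

lemma r1: "i < h \<Longrightarrow> card {k. k < h \<and> (k < i) \<noteq> (k < Suc i)} = 1"
proof -
  assume "i < h"
  then have "{k. k < h \<and> (k < i) \<noteq> (k < Suc i)} = {i}" by auto
  then show ?thesis by simp
qed

lemma r2: "Suc j \<le> h - 2 \<Longrightarrow> card {k. k < h \<and> Y j k \<noteq> Y (Suc j) k} = 1"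
proof -
  assume j: "Suc j \<le> h - 2"
  show ?thesis
  proof (cases "j < ka")
    case True
    have "{k. k < h \<and> Y j k \<noteq> Y (Suc j) k} = {j}"
    proof (intro set_eqI iffI)
      fix k assume "k \<in> {k. k < h \<and> Y j k \<noteq> Y (Suc j) k}"
      then show "k \<in> {j}" using True unfolding Y_def by (simp split: if_splits; linarith)
    next
      fix k assume "k \<in> {j}"
      then show "k \<in> {k. k < h \<and> Y j k \<noteq> Y (Suc j) k}" using True ka_lt unfolding Y_def by simp
    qed
    then show ?thesis by simp
  next
    case False
    have "{k. k < h \<and> Y j k \<noteq> Y (Suc j) k} = {j + 2}"
    proof (intro set_eqI iffI)
      fix k assume "k \<in> {k. k < h \<and> Y j k \<noteq> Y (Suc j) k}"
      then show "k \<in> {j + 2}" using False unfolding Y_def by (simp split: if_splits; linarith)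
    next
      fix k assume "k \<in> {j + 2}"
      then show "k \<in> {k. k < h \<and> Y j k \<noteq> Y (Suc j) k}" using False j ka_lt unfolding Y_def by simp
    qed
    then show ?thesis by simp
  qed
qed

lemma r3: "i \<noteq> Suc ka \<Longrightarrow> i \<le> h \<Longrightarrow> card {k. k < h \<and> (k < i) \<noteq> Y (c i) k} = 1"
proof -
  assume i: "i \<noteq> Suc ka" "i \<le> h"
  show ?thesis
  proof (cases "i \<le> ka")
    case True
    have "{k. k < h \<and> (k < i) \<noteq> Y (c i) k} = {Suc ka}"
    proof (intro set_eqI iffI)
      fix k assume "k \<in> {k. k < h \<and> (k < i) \<noteq> Y (c i) k}"
      then show "k \<in> {Suc ka}" using True unfolding Y_def c_def by (simp split: if_splits; linarith)
    next
      fix k assume "k \<in> {Suc ka}"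
      then show "k \<in> {k. k < h \<and> (k < i) \<noteq> Y (c i) k}" using True ka_lt unfolding Y_def c_def by simp
    qed
    then show ?thesis by simp
  next
    case False
    have "{k. k < h \<and> (k < i) \<noteq> Y (c i) k} = {ka}"
    proof (intro set_eqI iffI)
      fix k assume "k \<in> {k. k < h \<and> (k < i) \<noteq> Y (c i) k}"
      then show "k \<in> {ka}" using False i unfolding Y_def c_def by (simp split: if_splits; linarith)
    next
      fix k assume "k \<in> {ka}"
      then show "k \<in> {k. k < h \<and> (k < i) \<noteq> Y (c i) k}" using False i ka_lt unfolding Y_def c_def by simp
    qed
    then show ?thesis by simp
  qed
qed

lemma r4: assumes "card {k. k < h \<and> (k < i) \<noteq> Y j k} = 1" "i \<le> h" "j \<le> h - 2"
  shows "i \<noteq> Suc ka \<and> j = c i"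
proof (rule ccontr)
  let ?D = "{k. k < h \<and> (k < i) \<noteq> Y j k}"
  assume ne: "\<not> (i \<noteq> Suc ka \<and> j = c i)"
  have kh: "Suc ka < h" by (rule ka_lt)
  have mem: "k \<in> ?D \<longleftrightarrow> k < h \<and> (k < i) \<noteq> Y j k" for k by simp
  consider "i = Suc ka" | "i \<le> ka" "j \<noteq> i" | "i \<ge> ka + 2" "j \<noteq> i - 2"
    using ne unfolding c_def by (cases "i \<le> ka"; cases "i = Suc ka") auto
  then show False
  proof cases
    case 1
    have d1: "ka \<in> ?D" and d2: "Suc ka \<in> ?D" using 1 kh unfolding Y_def by auto
    have "card ?D \<noteq> 1" by (rule two_mem[OF d1 d2]) simp
    then show False using assms(1) by simp
  next
    case 2
    have s: "Suc ka \<in> ?D" using 2 kh unfolding Y_def by auto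
    have "\<exists>w \<in> ?D. w \<noteq> Suc ka"
    proof (cases "j < i")
      case True
      then show ?thesis using 2 kh by (intro bexI[of _ j]) (auto simp: Y_def)
    next
      case False
      then have ji: "j > i" using 2 by simp
      show ?thesis
      proof (cases "i < ka")
        case True
        then show ?thesis using 2 kh ji by (intro bexI[of _ i]) (auto simp: Y_def)
      next
        case False
        then show ?thesis using 2 kh ji assms(3) by (intro bexI[of _ "ka + 2"]) (auto simp: Y_def)
      qed
    qed
    then obtain w where w: "w \<in> ?D" "w \<noteq> Suc ka" by blast
    have "card ?D \<noteq> 1" using two_mem[OF s w(1)] w(2) by blast
    then show False using assms(1) by simp
  next
    case 3
    have s: "ka \<in> ?D" using 3 kh unfolding Y_def by auto
    have "\<exists>w \<in> ?D. w \<noteq> ka"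
    proof (cases "j < i - 2")
      case True
      show ?thesis
      proof (cases "j < ka")
        case True
        then show ?thesis using 3 kh by (intro bexI[of _ j]) (auto simp: Y_def)
      next
        case False
        then show ?thesis using 3 kh True assms by (intro bexI[of _ "j + 2"]) (auto simp: Y_def)
      qed
    next
      case False
      then have "j > i - 2" using 3 by simp
      then have "i < h" using assms 3 by auto
      then show ?thesis using 3 kh \<open>j > i - 2\<close> by (intro bexI[of _ i]) (auto simp: Y_def)
    qed
    then obtain w where w: "w \<in> ?D" "w \<noteq> ka" by blast
    have "card ?D \<noteq> 1" using two_mem[OF s w(1)] w(2) by blast
    then show False using assms(1) by simp
  qed
qed

lemma r5: "\<forall>k<h. (k < i) = Y j k \<Longrightarrow> False"
proof -
  assume h1: "\<forall>k<h. (k < i) = Y j k"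
  then have "(ka < i) = Y j ka" "(Suc ka < i) = Y j (Suc ka)" using ka_lt by auto
  then show False unfolding Y_def by auto
qed

lemma r6: "i \<le> h \<Longrightarrow> i' \<le> h \<Longrightarrow> \<forall>k<h. (k < i) = (k < i') \<Longrightarrow> i = i'"
proof (rule ccontr)
  assume a: "i \<le> h" "i' \<le> h" "\<forall>k<h. (k < i) = (k < i')" "i \<noteq> i'"
  show False
  proof (cases "i < i'")
    case True then show False using a(2,3) spec[OF a(3), of i] by simp
  next
    case False then have "i' < i" using a(4) by simp
    then show False using a(1,3) spec[OF a(3), of i'] by simp
  qed
qed

lemma r7: assumes "j \<le> h - 2" "j' \<le> h - 2" "\<forall>k<h. Y j k = Y j' k" shows "j = j'"
proof (rule ccontr)
  assume "j \<noteq> j'"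
  have kh: "Suc ka < h" by (rule ka_lt)
  have "\<exists>w<h. Y j w \<noteq> Y j' w" if "j < j'" "j \<le> h - 2" "j' \<le> h - 2" for j j'
  proof (cases "j < ka")
    case True then show ?thesis using that kh by (intro exI[of _ j]) (auto simp: Y_def)
  next
    case False then show ?thesis using that kh by (intro exI[of _ "j + 2"]) (auto simp: Y_def)
  qed
  then show False using assms \<open>j \<noteq> j'\<close> by (metis linorder_neqE_nat)
qed

end


context gk
begin

lemma qadj_ne: "qadj n u v \<Longrightarrow> u \<noteq> v"
  unfolding qadj_def by auto

lemma V1: "i < h \<Longrightarrow> qadj n (fill C i) (fill C (Suc i))"
  using qadj_iff[OF isv_x isv_x] r1 by simp

lemma V2: "Suc j \<le> h - 2 \<Longrightarrow> qadj n (fill C' j) (fill C' (Suc j))"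
  using qadj_iff[OF isv_y isv_y] r2 by simp

lemma V3: "i \<noteq> Suc ka \<Longrightarrow> i \<le> h \<Longrightarrow> qadj n (fill C i) (fill C' (c i))"
  using qadj_iff[OF isv_x isv_y] r3 by simp

lemma V4: "qadj n (fill C i) (fill C' j) \<Longrightarrow> i \<le> h \<Longrightarrow> j \<le> h - 2 \<Longrightarrow> i \<noteq> Suc ka \<and> j = c i"
  using qadj_iff[OF isv_x isv_y] r4 by simp

lemma V5: "fill C i \<noteq> fill C' j"
proof
  assume "fill C i = fill C' j"
  then have "\<forall>k<h. (k < i) = Y j k" using eqtrans[OF isv_x isv_y] by blast
  then show False by (rule r5)
qed

lemma V6: "i \<le> h \<Longrightarrow> i' \<le> h \<Longrightarrow> fill C i = fill C i' \<Longrightarrow> i = i'"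
  using eqtrans[OF isv_x isv_x] r6 by blast

lemma V7: "j \<le> h - 2 \<Longrightarrow> j' \<le> h - 2 \<Longrightarrow> fill C' j = fill C' j' \<Longrightarrow> j = j'"
  using eqtrans[OF isv_y isv_y] r7 by blast

lemma edgeC_inj: "i < h \<Longrightarrow> i' < h \<Longrightarrow> {fill C i, fill C (Suc i)} = {fill C i', fill C (Suc i')} \<Longrightarrow> i = i'"
proof -
  assume h1: "i < h" "i' < h" "{fill C i, fill C (Suc i)} = {fill C i', fill C (Suc i')}"
  then have "(fill C i = fill C i' \<and> fill C (Suc i) = fill C (Suc i')) \<or> (fill C i = fill C (Suc i') \<and> fill C (Suc i) = fill C i')"
    by (simp add: doubleton_eq_iff)
  then show "i = i'"
  proof
    assume "fill C i = fill C i' \<and> fill C (Suc i) = fill C (Suc i')"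
    then show ?thesis using V6[of i i'] h1 by simp
  next
    assume "fill C i = fill C (Suc i') \<and> fill C (Suc i) = fill C i'"
    then have "i = Suc i'" "Suc i = i'" using V6[of i "Suc i'"] V6[of "Suc i" i'] h1 by auto
    then show ?thesis by simp
  qed
qed

lemma edgeC'_inj: "j < h - 2 \<Longrightarrow> j' < h - 2 \<Longrightarrow> {fill C' j, fill C' (Suc j)} = {fill C' j', fill C' (Suc j')} \<Longrightarrow> j = j'"
proof -
  assume h1: "j < h - 2" "j' < h - 2" "{fill C' j, fill C' (Suc j)} = {fill C' j', fill C' (Suc j')}"
  then have "(fill C' j = fill C' j' \<and> fill C' (Suc j) = fill C' (Suc j')) \<or> (fill C' j = fill C' (Suc j') \<and> fill C' (Suc j) = fill C' j')"
    by (simp add: doubleton_eq_iff)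
  then show "j = j'"
  proof
    assume "fill C' j = fill C' j' \<and> fill C' (Suc j) = fill C' (Suc j')"
    then show ?thesis using V7[of j j'] h1 by simp
  next
    assume "fill C' j = fill C' (Suc j') \<and> fill C' (Suc j) = fill C' j'"
    then have "j = Suc j'" "Suc j = j'" using V7[of j "Suc j'"] V7[of "Suc j" j'] h1 by auto
    then show ?thesis by simp
  qed
qed

lemma disj: "chain_vertices C h \<inter> chain_vertices C' (h - 2) = {}"
  unfolding chain_vertices_def using V5 by blast

lemma y_notin_C: "fill C' j \<in> e \<Longrightarrow> e \<in> chain_edges C h \<Longrightarrow> False"
proof -
  assume "fill C' j \<in> e" "e \<in> chain_edges C h"
  then obtain m where "fill C' j = fill C m \<or> fill C' j = fill C (Suc m)" unfolding chain_edges_def by blast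
  then show False using V5 by metis
qed

lemma x_notin_C': "fill C i \<in> e \<Longrightarrow> e \<in> chain_edges C' h' \<Longrightarrow> False"
proof -
  assume "fill C i \<in> e" "e \<in> chain_edges C' h'"
  then obtain m where "fill C i = fill C' m \<or> fill C i = fill C' (Suc m)" unfolding chain_edges_def by blast
  then show False using V5 by metis
qed

definition I where "I = {i. i < h \<and> i \<noteq> ka \<and> i \<noteq> Suc ka}"

definition Ec where "Ec i = {{fill C i, fill C (Suc i)}, {fill C (Suc i), fill C' (Suc (c i))},
   {fill C' (Suc (c i)), fill C' (c i)}, {fill C' (c i), fill C i}}"

lemma cI: "i \<in> I \<Longrightarrow> Suc (c i) \<le> h - 2 \<and> c (Suc i) = Suc (c i)"
  using ka_lt unfolding I_def c_def by auto

lemma c_inj: "i \<in> I \<Longrightarrow> i' \<in> I \<Longrightarrow> c i = c i' \<Longrightarrow> i = i'"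
  unfolding I_def c_def by (auto split: if_splits)

lemma EcC: "i \<in> I \<Longrightarrow> Ec i \<inter> chain_edges C h = {{fill C i, fill C (Suc i)}}"
proof -
  assume iI: "i \<in> I"
  have "{fill C i, fill C (Suc i)} \<in> chain_edges C h" using iI unfolding I_def chain_edges_def by auto
  moreover have "e \<in> chain_edges C h \<Longrightarrow> e \<in> Ec i \<Longrightarrow> e = {fill C i, fill C (Suc i)}" for e
    unfolding Ec_def using y_notin_C by blast
  ultimately show ?thesis unfolding Ec_def by blast
qed

lemma EcC': "i \<in> I \<Longrightarrow> Ec i \<inter> chain_edges C' (h - 2) = {{fill C' (c i), fill C' (Suc (c i))}}"
proof -
  assume iI: "i \<in> I"
  have "{fill C' (c i), fill C' (Suc (c i))} \<in> chain_edges C' (h - 2)" using cI[OF iI] unfolding chain_edges_def by auto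
  moreover have "e = {fill C' (c i), fill C' (Suc (c i))}" if e1: "e \<in> chain_edges C' (h - 2)" and e2: "e \<in> Ec i" for e
  proof -
    from e2 consider "e = {fill C i, fill C (Suc i)}" | "e = {fill C (Suc i), fill C' (Suc (c i))}"
      | "e = {fill C' (Suc (c i)), fill C' (c i)}" | "e = {fill C' (c i), fill C i}"
      unfolding Ec_def by blast
    then show ?thesis
    proof cases
      case 1 then show ?thesis using x_notin_C'[of i e] e1 by blast
    next
      case 2 then show ?thesis using x_notin_C'[of "Suc i" e] e1 by blast
    next
      case 3 then show ?thesis by (simp add: insert_commute)
    next
      case 4 then show ?thesis using x_notin_C'[of i e] e1 by blast
    qed
  qed
  ultimately show ?thesis unfolding Ec_def by (auto simp: insert_commute)
qed

lemma flip_Ec: "i \<in> I \<Longrightarrow> flipping n C h C' (h - 2) (Ec i)"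
proof -
  assume iI: "i \<in> I"
  have ih: "i < h" "i \<noteq> Suc ka" "Suc i \<noteq> Suc ka" "Suc i \<le> h" using iI unfolding I_def by auto
  have a1: "qadj n (fill C i) (fill C (Suc i))" using V1 ih by simp
  have a2: "qadj n (fill C (Suc i)) (fill C' (Suc (c i)))" using V3[of "Suc i"] ih cI[OF iI] by simp
  have "qadj n (fill C' (c i)) (fill C' (Suc (c i)))" using V2 cI[OF iI] by simp
  then have a3: "qadj n (fill C' (Suc (c i))) (fill C' (c i))" using qadj_sym by blast
  have "qadj n (fill C i) (fill C' (c i))" using V3[of i] ih by simp
  then have a4: "qadj n (fill C' (c i)) (fill C i)" using qadj_sym by blast
  have d: "distinct [fill C i, fill C (Suc i), fill C' (Suc (c i)), fill C' (c i)]"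
    using qadj_ne[OF a1] qadj_ne[OF a3] V5[of "Suc i" "Suc (c i)"] V5[of "Suc i" "c i"] V5[of i "c i"] V5[of i "Suc (c i)"] by auto
  have "cycle4 n (Ec i)" unfolding cycle4_def Ec_def
    by (rule exI[of _ "fill C i"], rule exI[of _ "fill C (Suc i)"], rule exI[of _ "fill C' (Suc (c i))"],
        rule exI[of _ "fill C' (c i)"]) (use d a1 a2 a3 a4 in simp)
  then show ?thesis unfolding flipping_def using disj EcC[OF iI] EcC'[OF iI] by simp
qed

end


lemma cyc_edge2: "E = {{v0, v1}, {v1, v2}, {v2, v3}, {v3, v0}} \<Longrightarrow>
  qadj n v0 v1 \<Longrightarrow> qadj n v1 v2 \<Longrightarrow> qadj n v2 v3 \<Longrightarrow> qadj n v3 v0 \<Longrightarrow> {P, Q} \<in> E \<Longrightarrow>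
  P \<in> {v0, v1, v2, v3} \<and> Q \<in> {v0, v1, v2, v3} \<and> qadj n P Q"
  by (auto simp: doubleton_eq_iff qadj_sym)

context gk
begin

lemma flip_char: assumes F: "flipping n C h C' (h - 2) E" shows "\<exists>i\<in>I. E = Ec i"
proof -
  have c1: "card (E \<inter> chain_edges C h) = 1" and c2: "card (E \<inter> chain_edges C' (h - 2)) = 1"
    and cy: "cycle4 n E" using F unfolding flipping_def by auto
  obtain e where "e \<in> E \<inter> chain_edges C h" using c1 by (metis card_1_singletonE insertI1)
  then obtain i where i: "i < h" and eE: "{fill C i, fill C (Suc i)} \<in> E" unfolding chain_edges_def by blast
  obtain e' where "e' \<in> E \<inter> chain_edges C' (h - 2)" using c2 by (metis card_1_singletonE insertI1)
  then obtain j where j: "j < h - 2" and eE': "{fill C' j, fill C' (Suc j)} \<in> E" unfolding chain_edges_def by blast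
  obtain v0 v1 v2 v3 where dv: "distinct [v0, v1, v2, v3]" and q: "qadj n v0 v1" "qadj n v1 v2" "qadj n v2 v3" "qadj n v3 v0"
    and Ed: "E = {{v0, v1}, {v1, v2}, {v2, v3}, {v3, v0}}" using cy unfolding cycle4_def by blast
  note ce = cyc_edge2[OF Ed q]
  let ?V = "{v0, v1, v2, v3}"
  let ?x = "fill C i" and ?x1 = "fill C (Suc i)" and ?y = "fill C' j" and ?y1 = "fill C' (Suc j)"
  have xy_ne: "?x \<noteq> ?x1" "?y \<noteq> ?y1" using qadj_ne V1 i V2 j by auto
  have dS: "distinct [?x, ?x1, ?y, ?y1]" using xy_ne V5 by auto
  have sub: "{?x, ?x1, ?y, ?y1} \<subseteq> ?V" using ce[OF eE] ce[OF eE'] by auto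
  have "card {?x, ?x1, ?y, ?y1} = 4" using distinct_card[OF dS] by simp
  moreover have "card ?V = 4" using distinct_card[OF dv] by simp
  ultimately have Veq: "?V = {?x, ?x1, ?y, ?y1}" using card_subset_eq[OF _ sub] by simp
  have xinV: "?x \<in> ?V" "?x1 \<in> ?V" using Veq by auto
  obtain j' where j': "j' = j \<or> j' = Suc j" "{?x, fill C' j'} \<in> E"
  proof -
    obtain A B where AB: "A \<noteq> B" "A \<noteq> ?x" "B \<noteq> ?x" "{?x, A} \<in> E" "{?x, B} \<in> E"
      using cyc_nb[OF dv Ed xinV(1)] by blast
    have "A \<in> {?x1, ?y, ?y1}" "B \<in> {?x1, ?y, ?y1}" using ce[OF AB(4)] ce[OF AB(5)] AB(2,3) Veq by auto
    then have "(A = ?y \<or> A = ?y1) \<and> {?x, A} \<in> E \<or> (B = ?y \<or> B = ?y1) \<and> {?x, B} \<in> E" using AB by auto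
    then show ?thesis using that by blast
  qed
  obtain j'' where j'': "j'' = j \<or> j'' = Suc j" "{?x1, fill C' j''} \<in> E"
  proof -
    obtain A B where AB: "A \<noteq> B" "A \<noteq> ?x1" "B \<noteq> ?x1" "{?x1, A} \<in> E" "{?x1, B} \<in> E"
      using cyc_nb[OF dv Ed xinV(2)] by blast
    have "A \<in> {?x, ?y, ?y1}" "B \<in> {?x, ?y, ?y1}" using ce[OF AB(4)] ce[OF AB(5)] AB(2,3) Veq by auto
    then have "(A = ?y \<or> A = ?y1) \<and> {?x1, A} \<in> E \<or> (B = ?y \<or> B = ?y1) \<and> {?x1, B} \<in> E" using AB by auto
    then show ?thesis using that by blast
  qed
  have j'b: "j' \<le> h - 2" "j'' \<le> h - 2" using j' j'' j by auto
  have A1: "i \<noteq> Suc ka \<and> j' = c i" using V4[of i j'] ce[OF j'(2)] i j'b by simp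
  have A2: "Suc i \<noteq> Suc ka \<and> j'' = c (Suc i)" using V4[of "Suc i" j''] ce[OF j''(2)] i j'b by simp
  have "j' \<noteq> j''"
  proof
    assume "j' = j''"
    then have t: "{?x1, fill C' j'} \<in> E" using j'' by simp
    have "?x \<noteq> fill C' j'" "?x1 \<noteq> fill C' j'" using V5 by auto
    then show False using cyc_tri[OF dv Ed eE t j'(2)] xy_ne by blast
  qed
  have iI: "i \<in> I" using A1 A2 i unfolding I_def by simp
  have cj: "c i = j" using cI[OF iI] A1 A2 j' j'' \<open>j' \<noteq> j''\<close> by auto
  have nq1: "\<not> qadj n ?x ?y1" using V4[of i "Suc j"] i j cj by auto
  have nq2: "\<not> qadj n ?x1 ?y" using V4[of "Suc i" j] i j cj cI[OF iI] by auto
  have Ecj: "Ec i = {{?x, ?x1}, {?x1, ?y1}, {?y1, ?y}, {?y, ?x}}" unfolding Ec_def cj by simp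
  have "E \<subseteq> Ec i"
  proof
    fix f assume f: "f \<in> E"
    then obtain P Q where PQ: "f = {P, Q}" using Ed by blast
    then have "P \<in> ?V" "Q \<in> ?V" "qadj n P Q" using ce f by auto
    moreover have "P \<noteq> Q" using qadj_ne \<open>qadj n P Q\<close> by blast
    ultimately show "f \<in> Ec i" unfolding Ecj PQ Veq using nq1 nq2 qadj_sym by (auto simp: insert_commute)
  qed
  moreover have "Ec i \<subseteq> E"
  proof -
    have "{?x1, ?y1} \<in> E" using j'' A2 cj cI[OF iI] by auto
    moreover have "{?y, ?x} \<in> E" using j' A1 cj by (simp add: insert_commute)
    moreover have "{?y1, ?y} \<in> E" using eE' by (simp add: insert_commute)
    ultimately show ?thesis unfolding Ecj using eE by simp
  qed
  ultimately show ?thesis using iI by blast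
qed

lemma flips_x: "m < h \<Longrightarrow> flips a {fill C m, fill C (Suc m)} \<longleftrightarrow> m = ka"
proof -
  have e: "fill C m ! a = (ka < m)" "fill C (Suc m) ! a = (ka < Suc m)"
    using nth_fill[of a C m] nth_fill[of a C "Suc m"] ab lenC unfolding ka_def by simp_all
  have "flips a {fill C m, fill C (Suc m)} \<longleftrightarrow> fill C m ! a \<noteq> fill C (Suc m) ! a" by (rule flips_pair)
  also have "\<dots> \<longleftrightarrow> (ka < m) \<noteq> (ka < Suc m)" using e by (simp only:)
  also have "\<dots> \<longleftrightarrow> m = ka" by presburger
  finally show ?thesis .
qed

lemma flips_xb: "m < h \<Longrightarrow> flips b {fill C m, fill C (Suc m)} \<longleftrightarrow> m = Suc ka"
proof -
  have e: "fill C m ! b = (Suc ka < m)" "fill C (Suc m) ! b = (Suc ka < Suc m)"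
    using nth_fill[of b C m] nth_fill[of b C "Suc m"] ab lenC Rb by simp_all
  have "flips b {fill C m, fill C (Suc m)} \<longleftrightarrow> fill C m ! b \<noteq> fill C (Suc m) ! b" by (rule flips_pair)
  also have "\<dots> \<longleftrightarrow> (Suc ka < m) \<noteq> (Suc ka < Suc m)" using e by (simp only:)
  also have "\<dots> \<longleftrightarrow> m = Suc ka" by presburger
  finally show ?thesis .
qed

lemma main:
  shows "finite {E. flipping n C h C' (h - 2) E}
    \<and> card {E. flipping n C h C' (h - 2) E} = h - 2
    \<and> (\<forall>E1 E2. flipping n C h C' (h - 2) E1 \<and> flipping n C h C' (h - 2) E2 \<and> E1 \<noteq> E2 \<longrightarrow>
         E1 \<inter> chain_edges C h \<noteq> E2 \<inter> chain_edges C h \<and>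
         E1 \<inter> chain_edges C' (h - 2) \<noteq> E2 \<inter> chain_edges C' (h - 2))
    \<and> (\<Union>E\<in>{E. flipping n C h C' (h - 2) E}. E \<inter> chain_edges C h)
        = {e \<in> chain_edges C h. \<not> flips a e \<and> \<not> flips b e}"
proof -
  have Seq: "{E. flipping n C h C' (h - 2) E} = Ec ` I"
  proof (intro set_eqI iffI)
    fix E assume "E \<in> {E. flipping n C h C' (h - 2) E}"
    then obtain i where "i \<in> I" "E = Ec i" using flip_char by blast
    then show "E \<in> Ec ` I" by blast
  next
    fix E assume "E \<in> Ec ` I"
    then show "E \<in> {E. flipping n C h C' (h - 2) E}" using flip_Ec by blast
  qed
  have inj: "inj_on Ec I"
  proof (rule inj_onI)
    fix i i' assume "i \<in> I" "i' \<in> I" "Ec i = Ec i'"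
    then have "{{fill C i, fill C (Suc i)}} = {{fill C i', fill C (Suc i')}}" using EcC by metis
    then show "i = i'" using edgeC_inj \<open>i \<in> I\<close> \<open>i' \<in> I\<close> unfolding I_def by simp
  qed
  have Ieq: "I = {..<h} - {ka, Suc ka}" unfolding I_def by auto
  have cardI: "card I = h - 2" unfolding Ieq using ka_lt by (subst card_Diff_subset) auto
  have finI: "finite I" unfolding Ieq by simp
  have P1: "finite {E. flipping n C h C' (h - 2) E}" unfolding Seq using finI by simp
  have P2: "card {E. flipping n C h C' (h - 2) E} = h - 2" unfolding Seq using card_image[OF inj] cardI by simp
  have P3: "E1 \<inter> chain_edges C h \<noteq> E2 \<inter> chain_edges C h \<and>
         E1 \<inter> chain_edges C' (h - 2) \<noteq> E2 \<inter> chain_edges C' (h - 2)"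
    if "flipping n C h C' (h - 2) E1" "flipping n C h C' (h - 2) E2" "E1 \<noteq> E2" for E1 E2
  proof -
    have "E1 \<in> Ec ` I" "E2 \<in> Ec ` I" using that(1,2) unfolding Seq[symmetric] by simp_all
    then obtain i1 i2 where i: "i1 \<in> I" "i2 \<in> I" "E1 = Ec i1" "E2 = Ec i2" by (meson imageE)
    have ne: "i1 \<noteq> i2"
    proof
      assume "i1 = i2" then have "E1 = E2" using i by simp
      then show False using that(3) by simp
    qed
    have ia: "i1 < h" "i2 < h" using i unfolding I_def by auto
    have n1: "{fill C i1, fill C (Suc i1)} \<noteq> {fill C i2, fill C (Suc i2)}"
    proof
      assume "{fill C i1, fill C (Suc i1)} = {fill C i2, fill C (Suc i2)}"
      then show False using edgeC_inj[OF ia] ne by blast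
    qed
    have cb: "c i1 < h - 2" "c i2 < h - 2" using cI[OF i(1)] cI[OF i(2)] by auto
    have cne: "c i1 \<noteq> c i2" using c_inj[OF i(1) i(2)] ne by blast
    have n2: "{fill C' (c i1), fill C' (Suc (c i1))} \<noteq> {fill C' (c i2), fill C' (Suc (c i2))}"
    proof
      assume "{fill C' (c i1), fill C' (Suc (c i1))} = {fill C' (c i2), fill C' (Suc (c i2))}"
      then show False using edgeC'_inj[OF cb] cne by blast
    qed
    have "E1 \<inter> chain_edges C h = {{fill C i1, fill C (Suc i1)}}" "E2 \<inter> chain_edges C h = {{fill C i2, fill C (Suc i2)}}"
      "E1 \<inter> chain_edges C' (h - 2) = {{fill C' (c i1), fill C' (Suc (c i1))}}"
      "E2 \<inter> chain_edges C' (h - 2) = {{fill C' (c i2), fill C' (Suc (c i2))}}"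
      using EcC[OF i(1)] EcC[OF i(2)] EcC'[OF i(1)] EcC'[OF i(2)] i(3,4) by simp_all
    then show ?thesis using n1 n2 by simp
  qed
  have P4: "(\<Union>E\<in>{E. flipping n C h C' (h - 2) E}. E \<inter> chain_edges C h)
        = {e \<in> chain_edges C h. \<not> flips a e \<and> \<not> flips b e}"
  proof -
    have "(\<Union>E\<in>{E. flipping n C h C' (h - 2) E}. E \<inter> chain_edges C h) = (\<Union>i\<in>I. {{fill C i, fill C (Suc i)}})"
    proof -
      have "(\<Union>E\<in>{E. flipping n C h C' (h - 2) E}. E \<inter> chain_edges C h) = (\<Union>i\<in>I. Ec i \<inter> chain_edges C h)"
        unfolding Seq by blast
      also have "\<dots> = (\<Union>i\<in>I. {{fill C i, fill C (Suc i)}})"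
        by (rule SUP_cong[OF refl]) (rule EcC)
      finally show ?thesis .
    qed
    also have "\<dots> = {e \<in> chain_edges C h. \<not> flips a e \<and> \<not> flips b e}"
    proof (intro set_eqI iffI)
      fix e assume "e \<in> (\<Union>i\<in>I. {{fill C i, fill C (Suc i)}})"
      then obtain i where "i \<in> I" "e = {fill C i, fill C (Suc i)}" by blast
      then show "e \<in> {e \<in> chain_edges C h. \<not> flips a e \<and> \<not> flips b e}"
        using flips_x flips_xb unfolding I_def chain_edges_def by auto
    next
      fix e assume "e \<in> {e \<in> chain_edges C h. \<not> flips a e \<and> \<not> flips b e}"
      then obtain m where "m < h" "e = {fill C m, fill C (Suc m)}" "\<not> flips a e" "\<not> flips b e"
        unfolding chain_edges_def by blast
      then show "e \<in> (\<Union>i\<in>I. {{fill C i, fill C (Suc i)}})"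
        using flips_x flips_xb unfolding I_def by auto
    qed
    finally show ?thesis .
  qed
  show ?thesis using P1 P2 P4 by (intro conjI allI impI) (use P3 in auto)
qed

end

theorem lemma12:
  fixes n h a b :: nat and C C' :: "sym list"
  assumes "gk_chain n h C"
    and "child_at C a b C'"
  shows "finite {E. flipping n C h C' (h - 2) E}
    \<and> card {E. flipping n C h C' (h - 2) E} = h - 2
    \<and> (\<forall>E1 E2. flipping n C h C' (h - 2) E1 \<and> flipping n C h C' (h - 2) E2 \<and> E1 \<noteq> E2 \<longrightarrow>
         E1 \<inter> chain_edges C h \<noteq> E2 \<inter> chain_edges C h \<and>
         E1 \<inter> chain_edges C' (h - 2) \<noteq> E2 \<inter> chain_edges C' (h - 2))
    \<and> (\<Union>E\<in>{E. flipping n C h C' (h - 2) E}. E \<inter> chain_edges C h)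
        = {e \<in> chain_edges C h. \<not> flips a e \<and> \<not> flips b e}"
proof -
  interpret gk n h a b C C' using assms by unfold_locales
  show ?thesis by (rule main)
qed

end
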